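(* Let $\mathbb{K}\in\{\mathbb{R},\mathbb{C}\}$, $A\in\mathbb{K}^{n\times n}$, and let $Q_1,Q_2\in\mathbb{K}^{n\times n}$ be unitary (orthogonal if $\mathbb{K}=\mathbb{R}$). Let $(Q_1A^{*}Q_2A)^{1/2}$ denote a square root of $Q_1A^{*}Q_2A$. Then $$|\lambda_{\max}((Q_1A^{*}Q_2A)^{1/2})|\le\sigma_{\max}(A),\qquad |\lambda_{\min}((Q_1A^{*}Q_2A)^{1/2})|\ge\sigma_{\min}(A).$$
   Context: $\cdot^{*}$ denotes the conjugate transpose (transpose if $\mathbb{K}=\mathbb{R}$). For a square matrix $B$, $\lambda_{\max}(B)$ and $\lambda_{\min}(B)$ denote eigenvalues of $B$ of largest and smallest modulus, respectively; $\sigma_{\max}(A)$, $\sigma_{\min}(A)$ denote the largest and smallest singular values of $A$. *)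

theory Defs
  imports "Jordan_Normal_Form.Spectral_Radius" "Jordan_Normal_Form.Schur_Decomposition"
begin

text \<open>Unitary (for real scalars: orthogonal) n x n matrices; mat_adjoint is the
  conjugate transpose (plain transpose over the reals).\<close>
definition unitary_mat :: "nat \<Rightarrow> 'a :: conjugatable_field mat \<Rightarrow> bool" where
  "unitary_mat n U \<longleftrightarrow> U \<in> carrier_mat n n \<and>
     mat_adjoint U * U = 1\<^sub>m n \<and> U * mat_adjoint U = 1\<^sub>m n"

definition lambda_max_abs :: "complex mat \<Rightarrow> real" where
  "lambda_max_abs B = Max (cmod ` spectrum B)"

definition lambda_min_abs :: "complex mat \<Rightarrow> real" where
  "lambda_min_abs B = Min (cmod ` spectrum B)"

definition singular_values :: "complex mat \<Rightarrow> real set" where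
  "singular_values A = (\<lambda>x. sqrt (Re x)) ` spectrum (mat_adjoint A * A)"

definition sigma_max :: "complex mat \<Rightarrow> real" where
  "sigma_max A = Max (singular_values A)"

definition sigma_min :: "complex mat \<Rightarrow> real" where
  "sigma_min A = Min (singular_values A)"

definition cmat :: "real mat \<Rightarrow> complex mat" where
  "cmat M = map_mat complex_of_real M"

end

theory Submission imports Defs begin

definition ip :: "complex vec \<Rightarrow> complex vec \<Rightarrow> complex" where
  "ip u v = (\<Sum>i<dim_vec v. cnj (u$i) * v$i)"
definition nsq :: "complex vec \<Rightarrow> real" where
  "nsq v = (\<Sum>i<dim_vec v. (cmod (v$i))^2)"

lemma adj_carrier: "A \<in> carrier_mat n m \<Longrightarrow> mat_adjoint A \<in> carrier_mat m n"
  by (auto simp: mat_adjoint_def mat_of_rows_def)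

lemma adj_index: "A \<in> carrier_mat n m \<Longrightarrow> i < m \<Longrightarrow> j < n \<Longrightarrow>
   mat_adjoint (A::complex mat) $$ (i,j) = cnj (A $$ (j,i))"
  by (auto simp: mat_adjoint_def mat_of_rows_def conjugate_complex_def)

lemma adj_adj: "A \<in> carrier_mat n m \<Longrightarrow> mat_adjoint (mat_adjoint (A::complex mat)) = A"
  by (rule eq_matI, auto simp: adj_index[OF adj_carrier] adj_index dest: adj_carrier)

lemma ip_adj: assumes A: "A \<in> carrier_mat n n" and u: "u \<in> carrier_vec n" and v: "v \<in> carrier_vec n"
  shows "ip (A *\<^sub>v u) v = ip u (mat_adjoint A *\<^sub>v v)"
proof -
  have "ip (A *\<^sub>v u) v = (\<Sum>i<n. \<Sum>j<n. cnj (A $$ (i,j)) * cnj (u $ j) * v $ i)"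
    using A u v by (auto simp: ip_def scalar_prod_def sum_distrib_right atLeast0LessThan
        intro!: sum.cong)
  also have "\<dots> = (\<Sum>j<n. \<Sum>i<n. cnj (A $$ (i,j)) * cnj (u $ j) * v $ i)"
    by (rule sum.swap)
  also have "\<dots> = ip u (mat_adjoint A *\<^sub>v v)"
    using A u v adj_carrier[OF A]
    by (auto simp: ip_def scalar_prod_def sum_distrib_left atLeast0LessThan adj_index
        intro!: sum.cong)
  finally show ?thesis .
qed

lemma cnj_mult_self: "cnj z * z = of_real ((cmod z)^2)"
  by (metis complex_norm_square mult.commute)

lemma ip_self: "ip v v = of_real (nsq v)"
  unfolding ip_def nsq_def of_real_sum cnj_mult_self ..

lemma nsq_nonneg: "nsq v \<ge> 0"
  by (simp add: nsq_def sum_nonneg)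

lemma CS_real: fixes a b :: "nat \<Rightarrow> real"
  shows "(\<Sum>i\<in>I. a i * b i)^2 \<le> (\<Sum>i\<in>I. (a i)^2) * (\<Sum>i\<in>I. (b i)^2)"
proof -
  have "0 \<le> (\<Sum>i\<in>I. \<Sum>j\<in>I. (a i * b j - a j * b i)^2)"
    by (intro sum_nonneg, auto)
  also have "\<dots> = (\<Sum>i\<in>I. \<Sum>j\<in>I. (a i)^2 * (b j)^2 + (a j)^2 * (b i)^2 - 2 * ((a i * b i) * (a j * b j)))"
    by (intro sum.cong refl, simp add: power2_eq_square algebra_simps)
  also have "\<dots> = 2 * ((\<Sum>i\<in>I. (a i)^2) * (\<Sum>i\<in>I. (b i)^2) - (\<Sum>i\<in>I. a i * b i)^2)"
  proof -
    have e1: "(\<Sum>i\<in>I. \<Sum>j\<in>I. (a i)^2 * (b j)^2) = (\<Sum>i\<in>I. (a i)^2) * (\<Sum>i\<in>I. (b i)^2)"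
      by (simp add: sum_product)
    have e2: "(\<Sum>i\<in>I. \<Sum>j\<in>I. (a j)^2 * (b i)^2) = (\<Sum>i\<in>I. (a i)^2) * (\<Sum>i\<in>I. (b i)^2)"
      by (subst sum.swap, simp add: sum_product)
    have e3: "(\<Sum>i\<in>I. \<Sum>j\<in>I. (a i * b i) * (a j * b j)) = (\<Sum>i\<in>I. a i * b i)^2"
      by (simp add: sum_product power2_eq_square)
    have e4: "(\<Sum>i\<in>I. \<Sum>j\<in>I. (a i)^2 * (b j)^2 + (a j)^2 * (b i)^2 - 2 * ((a i * b i) * (a j * b j)))
      = (\<Sum>i\<in>I. \<Sum>j\<in>I. (a i)^2 * (b j)^2) + (\<Sum>i\<in>I. \<Sum>j\<in>I. (a j)^2 * (b i)^2)
       - (\<Sum>i\<in>I. \<Sum>j\<in>I. 2 * ((a i * b i) * (a j * b j)))"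
      by (simp only: sum_subtractf sum.distrib)
    have e5: "(\<Sum>i\<in>I. \<Sum>j\<in>I. 2 * ((a i * b i) * (a j * b j))) = 2 * (\<Sum>i\<in>I. \<Sum>j\<in>I. (a i * b i) * (a j * b j))"
      by (simp add: sum_distrib_left)
    show ?thesis unfolding e4 e5 e1 e2 e3 by simp
  qed
  finally show ?thesis by simp
qed

lemma CS: assumes "dim_vec u = dim_vec v"
  shows "(cmod (ip u v))^2 \<le> nsq u * nsq v"
proof -
  have "cmod (ip u v) \<le> (\<Sum>i<dim_vec v. cmod (u$i) * cmod (v$i))"
    unfolding ip_def by (rule order_trans[OF norm_sum], simp add: norm_mult)
  hence "(cmod (ip u v))^2 \<le> (\<Sum>i<dim_vec v. cmod (u$i) * cmod (v$i))^2"
    by (simp add: power_mono)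
  also have "\<dots> \<le> nsq u * nsq v" unfolding nsq_def assms using CS_real .
  finally show ?thesis .
qed

lemma nsq_smult: "nsq (c \<cdot>\<^sub>v v) = (cmod c)^2 * nsq v"
  by (simp add: nsq_def norm_mult power_mult_distrib sum_distrib_left)

lemma nsq_zero: assumes "v \<in> carrier_vec n" "nsq v = 0" shows "v = 0\<^sub>v n"
proof (rule eq_vecI)
  show "dim_vec v = dim_vec (0\<^sub>v n)" using assms by auto
  fix i assume "i < dim_vec (0\<^sub>v n)"
  hence i: "i < dim_vec v" using assms by auto
  have "\<forall>j\<in>{..<dim_vec v}. (cmod (v$j))^2 = 0"
    using assms(2) unfolding nsq_def by (subst sum_nonneg_eq_0_iff[symmetric], auto)
  with i show "v $ i = 0\<^sub>v n $ i" using assms by auto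
qed

lemma nsq_pos: assumes "v \<in> carrier_vec n" "v \<noteq> 0\<^sub>v n" shows "nsq v > 0"
  using nsq_zero[OF assms(1)] assms(2) nsq_nonneg[of v] by force

lemma ip_minus_right: assumes "u \<in> carrier_vec n" "v \<in> carrier_vec n" "w \<in> carrier_vec n"
  shows "ip u (v - w) = ip u v - ip u w"
  using assms by (simp add: ip_def algebra_simps sum_subtractf)

lemma ip_smult_right: "ip u (c \<cdot>\<^sub>v v) = c * ip u v"
  by (simp add: ip_def sum_distrib_left algebra_simps)

lemma pow_mat_Suc_left: assumes A: "A \<in> carrier_mat n n"
  shows "A ^\<^sub>m Suc k = A * A ^\<^sub>m k"
proof (induction k)
  case 0 then show ?case using A by simp
next
  case (Suc k)
  have "A ^\<^sub>m Suc (Suc k) = A ^\<^sub>m Suc k * A" by simp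
  also have "\<dots> = (A * A ^\<^sub>m k) * A" using Suc by simp
  also have "\<dots> = A * (A ^\<^sub>m k * A)" using A by (intro assoc_mult_mat[of _ n n _ n _ n], auto)
  also have "\<dots> = A * A ^\<^sub>m Suc k" by simp
  finally show ?case .
qed

lemma adj_smult: assumes "(A::complex mat) \<in> carrier_mat n n"
  shows "mat_adjoint (of_real r \<cdot>\<^sub>m A) = of_real r \<cdot>\<^sub>m mat_adjoint A"
proof -
  have S: "of_real r \<cdot>\<^sub>m A \<in> carrier_mat n n" using assms by auto
  have c1: "mat_adjoint A \<in> carrier_mat n n" using adj_carrier[OF assms] .
  have c2: "mat_adjoint (of_real r \<cdot>\<^sub>m A) \<in> carrier_mat n n" using adj_carrier[OF S] .
  show ?thesis
    by (rule eq_matI, insert c1 c2 assms, auto simp: adj_index[OF S] adj_index[OF assms])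
qed

lemma bound_nsq: assumes M: "M \<in> carrier_mat n n" and nb: "norm_bound M c" and x: "x \<in> carrier_vec n"
  shows "nsq (M *\<^sub>v x) \<le> real n * (c * (\<Sum>j<n. cmod (x$j)))^2"
proof -
  have c0: "c \<ge> 0 \<or> n = 0" using nb M unfolding norm_bound_def
    by (metis carrier_matD norm_ge_zero order_trans neq0_conv)
  have e: "cmod ((M *\<^sub>v x) $ i) \<le> c * (\<Sum>j<n. cmod (x$j))" if i: "i < n" for i
  proof -
    have "cmod ((M *\<^sub>v x) $ i) = cmod (\<Sum>j<n. M $$ (i,j) * x $ j)"
      using M x i by (simp add: scalar_prod_def atLeast0LessThan)
    also have "\<dots> \<le> (\<Sum>j<n. cmod (M $$ (i,j)) * cmod (x $ j))"
      by (rule order_trans[OF norm_sum], simp add: norm_mult)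
    also have "\<dots> \<le> (\<Sum>j<n. c * cmod (x $ j))"
      using nb M i unfolding norm_bound_def by (intro sum_mono mult_right_mono, auto)
    finally show ?thesis by (simp add: sum_distrib_left)
  qed
  have "nsq (M *\<^sub>v x) = (\<Sum>i<n. (cmod ((M *\<^sub>v x) $ i))^2)" using M by (simp add: nsq_def)
  also have "\<dots> \<le> (\<Sum>i<n. (c * (\<Sum>j<n. cmod (x$j)))^2)"
    by (intro sum_mono power_mono e, auto)
  finally show ?thesis by simp
qed

lemma smult_mat_vec_c: assumes "(A::complex mat) \<in> carrier_mat n n" "v \<in> carrier_vec n"
  shows "(k \<cdot>\<^sub>m A) *\<^sub>v v = k \<cdot>\<^sub>v (A *\<^sub>v v)"
  using assms by (intro eq_vecI, auto simp: scalar_prod_def sum_distrib_left algebra_simps)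

lemma pow_carrier: "(A::complex mat) \<in> carrier_mat n n \<Longrightarrow> A ^\<^sub>m k \<in> carrier_mat n n"
  by (rule carrier_matI, auto)

lemma nsq_zero_vec: "nsq (0\<^sub>v n) = 0" by (simp add: nsq_def)

lemma core:
  assumes H: "H \<in> carrier_mat n n" and herm: "mat_adjoint H = H" and n: "n > 0"
    and x: "x \<in> carrier_vec n"
  shows "nsq (H *\<^sub>v x) \<le> (spectral_radius H)^2 * nsq x"
proof (rule ccontr)
  define \<rho> where "\<rho> = spectral_radius H"
  assume "\<not> ?thesis"
  hence gt: "nsq (H *\<^sub>v x) > \<rho>^2 * nsq x" by (simp add: \<rho>_def)
  have \<rho>0: "\<rho> \<ge> 0" using spectral_radius_mem_max(1)[OF H n] unfolding \<rho>_def by auto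
  have x0: "x \<noteq> 0\<^sub>v n"
  proof
    assume "x = 0\<^sub>v n"
    hence "H *\<^sub>v x = 0\<^sub>v n" using H by (intro eq_vecI, auto simp: scalar_prod_def)
    with gt \<open>x = 0\<^sub>v n\<close> show False by (simp add: nsq_zero_vec)
  qed
  have nx: "nsq x > 0" using nsq_pos[OF x x0] .
  define t where "t = nsq (H *\<^sub>v x) / nsq x"
  have t: "t > \<rho>^2" using gt nx by (simp add: t_def pos_less_divide_eq)
  have tx: "t * nsq x = nsq (H *\<^sub>v x)" using nx by (simp add: t_def)
  define s where "s = sqrt ((t + \<rho>^2)/2)"
  have r2: "0 \<le> \<rho>^2" by simp
  have t0: "0 < t" using r2 t by (rule le_less_trans)
  have q0: "(t + \<rho>^2)/2 > 0" by (intro divide_pos_pos add_pos_nonneg t0 r2, simp)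
  have s0: "s > 0" using q0 by (simp add: s_def)
  have s2: "s^2 = (t + \<rho>^2)/2" using q0 by (simp add: s_def)
  have ls: "\<rho>^2 < s^2" unfolding s2 using t by (simp add: field_simps)
  have s\<rho>: "\<rho> < s" by (rule power_less_imp_less_base[OF ls], insert s0, simp)
  have "s^2 < t" unfolding s2 using t by (simp add: field_simps)
  hence "s^2 * nsq x < t * nsq x" using nx by (intro mult_strict_right_mono)
  hence st: "s^2 * nsq x < nsq (H *\<^sub>v x)" using tx by simp
  define G where "G = complex_of_real (1/s) \<cdot>\<^sub>m H"
  have G: "G \<in> carrier_mat n n" using H by (simp add: G_def)
  have hG: "mat_adjoint G = G" unfolding G_def adj_smult[OF H] herm ..
  have HG: "H = complex_of_real s \<cdot>\<^sub>m G"
    by (rule eq_matI, insert H s0, auto simp: G_def)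
  have srG: "spectral_radius G < 1"
  proof -
    from spectral_radius_mem_max(1)[OF G n] obtain \<mu> where
      mu: "\<mu> \<in> spectrum G" "spectral_radius G = cmod \<mu>" by auto
    from mu(1) obtain v where ev: "eigenvector G v \<mu>" unfolding spectrum_def eigenvalue_def by auto
    hence v: "v \<in> carrier_vec n" "v \<noteq> 0\<^sub>v n" "G *\<^sub>v v = \<mu> \<cdot>\<^sub>v v"
      using G unfolding eigenvector_def by auto
    have "H *\<^sub>v v = complex_of_real s \<cdot>\<^sub>v (G *\<^sub>v v)"
      unfolding HG using smult_mat_vec_c[OF G v(1)] .
    also have "\<dots> = (complex_of_real s * \<mu>) \<cdot>\<^sub>v v" unfolding v(3) by (simp add: smult_smult_assoc)
    finally have "eigenvalue H (complex_of_real s * \<mu>)"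
      unfolding eigenvalue_def eigenvector_def using v H by auto
    hence "cmod (complex_of_real s * \<mu>) \<le> \<rho>"
      using spectral_radius_mem_max(2)[OF H n] unfolding \<rho>_def spectrum_def by auto
    hence "s * cmod \<mu> \<le> \<rho>" using s0 by (simp add: norm_mult)
    hence "s * cmod \<mu> < s * 1" using s\<rho> by simp
    hence "cmod \<mu> < 1" using s0 by (simp only: mult_less_cancel_left_pos)
    thus ?thesis using mu(2) by simp
  qed
  obtain c where c: "\<And>k. norm_bound (G ^\<^sub>m k) c"
    using spectral_radius_jnf_norm_bound_less_1_upper_triangular[OF G srG] by auto
  define a where "a k = nsq ((G ^\<^sub>m k) *\<^sub>v x)" for k
  have Gk: "G ^\<^sub>m k \<in> carrier_mat n n" for k using pow_carrier[OF G] .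
  have stepv: "(G ^\<^sub>m Suc k) *\<^sub>v x = G *\<^sub>v ((G ^\<^sub>m k) *\<^sub>v x)" for k
    unfolding pow_mat_Suc_left[OF G] using G Gk x by (simp add: assoc_mult_mat_vec[of _ n n _ n])
  have lc: "(a (Suc k))^2 \<le> a k * a (Suc (Suc k))" for k
  proof -
    have "complex_of_real (a (Suc k)) = ip ((G ^\<^sub>m Suc k) *\<^sub>v x) ((G ^\<^sub>m Suc k) *\<^sub>v x)"
      by (simp add: a_def ip_self)
    also have "\<dots> = ip (G *\<^sub>v ((G ^\<^sub>m k) *\<^sub>v x)) ((G ^\<^sub>m Suc k) *\<^sub>v x)" by (simp only: stepv)
    also have "\<dots> = ip ((G ^\<^sub>m k) *\<^sub>v x) (G *\<^sub>v ((G ^\<^sub>m Suc k) *\<^sub>v x))"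
    proof -
      have v1: "(G ^\<^sub>m k) *\<^sub>v x \<in> carrier_vec n" using Gk x by (rule mult_mat_vec_carrier)
      have v2: "(G ^\<^sub>m Suc k) *\<^sub>v x \<in> carrier_vec n" using Gk x by (rule mult_mat_vec_carrier)
      show ?thesis using ip_adj[OF G v1 v2] unfolding hG .
    qed
    also have "\<dots> = ip ((G ^\<^sub>m k) *\<^sub>v x) ((G ^\<^sub>m Suc (Suc k)) *\<^sub>v x)" by (simp only: stepv)
    finally have e: "complex_of_real (a (Suc k)) = ip ((G ^\<^sub>m k) *\<^sub>v x) ((G ^\<^sub>m Suc (Suc k)) *\<^sub>v x)" .
    have "(a (Suc k))^2 = (cmod (complex_of_real (a (Suc k))))^2" by simp
    also have "\<dots> = (cmod (ip ((G ^\<^sub>m k) *\<^sub>v x) ((G ^\<^sub>m Suc (Suc k)) *\<^sub>v x)))^2" by (simp only: e)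
    also have "\<dots> \<le> a k * a (Suc (Suc k))" unfolding a_def
    proof (rule CS)
      show "dim_vec ((G ^\<^sub>m k) *\<^sub>v x) = dim_vec ((G ^\<^sub>m Suc (Suc k)) *\<^sub>v x)"
        using Gk[of k] Gk[of "Suc (Suc k)"] by simp
    qed
    finally show ?thesis .
  qed
  define K where "K = real n * (c * (\<Sum>j<n. cmod (x$j)))^2"
  have bnd: "a k \<le> K" for k using bound_nsq[OF Gk c x] unfolding a_def K_def .
  have a0: "a 0 = nsq x" using x G by (simp add: a_def)
  have a1: "a 1 = nsq (H *\<^sub>v x) / s^2"
  proof -
    have "(G ^\<^sub>m 1) *\<^sub>v x = G *\<^sub>v x" using G by simp
    also have "\<dots> = complex_of_real (1/s) \<cdot>\<^sub>v (H *\<^sub>v x)" unfolding G_def using smult_mat_vec_c[OF H x] .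
    finally show ?thesis using s0 by (simp add: a_def nsq_smult power_divide norm_divide)
  qed
  have a0p: "a 0 > 0" using a0 nx by simp
  have a10: "a 1 > a 0" unfolding a1 a0 using st s0 by (simp add: pos_less_divide_eq mult.commute)
  define r where "r = a 1 / a 0"
  have r1: "r > 1" unfolding r_def using a10 a0p by simp
  have ar: "a 1 = r * a 0" unfolding r_def using a0p by simp
  have a_nonneg: "a k \<ge> 0" for k by (simp add: a_def nsq_nonneg)
  have grow: "a (Suc k) \<ge> r * a k \<and> a k \<ge> r^k * a 0" for k
  proof (induction k)
    case 0 then show ?case using ar by simp
  next
    case (Suc k)
    hence IH1: "a (Suc k) \<ge> r * a k" and IH2: "a k \<ge> r^k * a 0" by auto
    have "r^k * a 0 > 0" using r1 a0p by simp
    hence akp: "a k > 0" using IH2 by linarith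
    have "a k * (r * a (Suc k)) = a (Suc k) * (r * a k)" by simp
    also have "\<dots> \<le> a (Suc k) * a (Suc k)" by (rule mult_left_mono[OF IH1 a_nonneg])
    also have "\<dots> \<le> a k * a (Suc (Suc k))" using lc[of k] by (simp add: power2_eq_square)
    finally have "r * a (Suc k) \<le> a (Suc (Suc k))" using akp by simp
    moreover have "r^(Suc k) * a 0 \<le> a (Suc k)"
    proof -
      have "r^(Suc k) * a 0 = r * (r^k * a 0)" by simp
      also have "\<dots> \<le> r * a k" using IH2 r1 by (intro mult_left_mono, auto)
      finally show ?thesis using IH1 by simp
    qed
    ultimately show ?case by simp
  qed
  obtain k where "K / a 0 < r^k" using real_arch_pow[OF r1] by auto
  hence "K < r^k * a 0" using a0p by (simp add: pos_divide_less_eq)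
  with grow[of k] bnd[of k] show False by simp
qed

lemma adj_mult: assumes A: "(A::complex mat) \<in> carrier_mat n n" and B: "B \<in> carrier_mat n n"
  shows "mat_adjoint (A * B) = mat_adjoint B * mat_adjoint A"
proof -
  have AB: "A * B \<in> carrier_mat n n" using A B by simp
  have c1: "mat_adjoint (A * B) \<in> carrier_mat n n" using adj_carrier[OF AB] .
  have cA: "mat_adjoint A \<in> carrier_mat n n" using adj_carrier[OF A] .
  have cB: "mat_adjoint B \<in> carrier_mat n n" using adj_carrier[OF B] .
  show ?thesis
    by (rule eq_matI, insert c1 cA cB A B AB, auto simp: adj_index[OF AB] adj_index[OF A] adj_index[OF B]
        scalar_prod_def cnj_sum mult.commute intro!: sum.cong)
qed

lemma herm_CC: assumes C: "(C::complex mat) \<in> carrier_mat n n"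
  shows "mat_adjoint (mat_adjoint C * C) = mat_adjoint C * C"
  using adj_mult[OF adj_carrier[OF C] C] adj_adj[OF C] by simp

lemma nsq_CC: assumes C: "(C::complex mat) \<in> carrier_mat n n" and x: "x \<in> carrier_vec n"
  shows "complex_of_real (nsq (C *\<^sub>v x)) = ip x ((mat_adjoint C * C) *\<^sub>v x)"
proof -
  have "complex_of_real (nsq (C *\<^sub>v x)) = ip (C *\<^sub>v x) (C *\<^sub>v x)" by (simp add: ip_self)
  also have "\<dots> = ip x (mat_adjoint C *\<^sub>v (C *\<^sub>v x))" using ip_adj[OF C x] C x by simp
  also have "\<dots> = ip x ((mat_adjoint C * C) *\<^sub>v x)" using adj_carrier[OF C] C x
    by (simp add: assoc_mult_mat_vec[of _ n n _ n])
  finally show ?thesis .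
qed

lemma GL:
  assumes C: "(C::complex mat) \<in> carrier_mat n n" and n: "n > 0" and a0: "0 \<le> a" and ab: "a \<le> b"
    and spec: "\<And>l. l \<in> spectrum (mat_adjoint C * C) \<Longrightarrow> \<exists>r. l = complex_of_real r \<and> a \<le> r \<and> r \<le> b"
    and x: "x \<in> carrier_vec n"
  shows "a * nsq x \<le> nsq (C *\<^sub>v x) \<and> nsq (C *\<^sub>v x) \<le> b * nsq x"
proof
  define H where "H = mat_adjoint C * C"
  have H: "H \<in> carrier_mat n n" using adj_carrier[OF C] C by (simp add: H_def)
  have hH: "mat_adjoint H = H" unfolding H_def using herm_CC[OF C] .
  have e1: "complex_of_real (nsq (C *\<^sub>v x)) = ip x (H *\<^sub>v x)" unfolding H_def using nsq_CC[OF C x] .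
  have nx: "nsq x \<ge> 0" by (rule nsq_nonneg)
  have hx: "H *\<^sub>v x \<in> carrier_vec n" using H x by simp
  have "spectral_radius H \<le> b"
  proof -
    from spectral_radius_mem_max(1)[OF H n] obtain l where l: "l \<in> spectrum H" "spectral_radius H = cmod l" by auto
    from spec[OF l(1)[unfolded H_def]] obtain r where "l = complex_of_real r" "a \<le> r" "r \<le> b" by auto
    with l(2) a0 show ?thesis by simp
  qed
  moreover have "spectral_radius H \<ge> 0" using spectral_radius_mem_max(1)[OF H n] by auto
  ultimately have "(spectral_radius H)^2 \<le> b^2" by (simp add: power_mono)
  hence "nsq (H *\<^sub>v x) \<le> b^2 * nsq x" using core[OF H hH n x] nx
    by (meson mult_right_mono order_trans)
  have "(nsq (C *\<^sub>v x))^2 = (cmod (ip x (H *\<^sub>v x)))^2"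
    unfolding e1[symmetric] by (simp add: nsq_nonneg)
  also have "\<dots> \<le> nsq x * nsq (H *\<^sub>v x)" using x hx H by (intro CS, simp)
  also have "\<dots> \<le> nsq x * (b^2 * nsq x)" using \<open>nsq (H *\<^sub>v x) \<le> b^2 * nsq x\<close> nx
    by (rule mult_left_mono)
  also have "\<dots> = (b * nsq x)^2" by (simp add: power2_eq_square)
  finally have "(nsq (C *\<^sub>v x))^2 \<le> (b * nsq x)^2" .
  moreover have b0: "0 \<le> b" using a0 ab by linarith
  ultimately show "nsq (C *\<^sub>v x) \<le> b * nsq x"
    using power2_le_imp_le mult_nonneg_nonneg nx by blast
  define H' where "H' = complex_of_real b \<cdot>\<^sub>m 1\<^sub>m n - H"
  have H': "H' \<in> carrier_mat n n" unfolding H'_def by (rule minus_carrier_mat[OF H])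
  have Hsym: "H $$ (i,j) = cnj (H $$ (j,i))" if "i < n" "j < n" for i j
    using adj_index[OF H that] hH by simp
  have Hij: "mat_adjoint H' $$ (i,j) = H' $$ (i,j)" if ij: "i < n" "j < n" for i j
  proof -
    have "mat_adjoint H' $$ (i,j) = cnj (H' $$ (j,i))" using adj_index[OF H' ij] .
    also have "\<dots> = cnj (complex_of_real b * (if j = i then 1 else 0) - H $$ (j,i))"
      using ij H by (simp add: H'_def)
    also have "\<dots> = complex_of_real b * (if i = j then 1 else 0) - cnj (H $$ (j,i))" by auto
    also have "\<dots> = complex_of_real b * (if i = j then 1 else 0) - H $$ (i,j)" unfolding Hsym[OF ij] ..
    also have "\<dots> = H' $$ (i,j)" using ij H by (simp add: H'_def)
    finally show ?thesis .
  qed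
  have hH': "mat_adjoint H' = H'"
    by (rule eq_matI, insert adj_carrier[OF H'] H', auto simp: Hij)
  have H'v: "H' *\<^sub>v v = complex_of_real b \<cdot>\<^sub>v v - H *\<^sub>v v" if v: "v \<in> carrier_vec n" for v
  proof -
    have bc: "complex_of_real b \<cdot>\<^sub>m 1\<^sub>m n \<in> carrier_mat n n" by simp
    have "H' *\<^sub>v v = (complex_of_real b \<cdot>\<^sub>m 1\<^sub>m n) *\<^sub>v v - H *\<^sub>v v"
      unfolding H'_def by (rule minus_mult_distrib_mat_vec[OF bc H v])
    also have "(complex_of_real b \<cdot>\<^sub>m 1\<^sub>m n) *\<^sub>v v = complex_of_real b \<cdot>\<^sub>v v"
      using smult_mat_vec_c[OF one_carrier_mat v] v by simp
    finally show ?thesis .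
  qed
  have "spectral_radius H' \<le> b - a"
  proof -
    from spectral_radius_mem_max(1)[OF H' n] obtain l where l: "l \<in> spectrum H'" "spectral_radius H' = cmod l" by auto
    from l(1) obtain v where ev: "eigenvector H' v l" unfolding spectrum_def eigenvalue_def by auto
    hence v: "v \<in> carrier_vec n" "v \<noteq> 0\<^sub>v n" "H' *\<^sub>v v = l \<cdot>\<^sub>v v"
      using H' unfolding eigenvector_def by auto
    have "H *\<^sub>v v = complex_of_real b \<cdot>\<^sub>v v - H' *\<^sub>v v"
      unfolding H'v[OF v(1)] using H v by (intro eq_vecI, auto)
    also have "\<dots> = (complex_of_real b - l) \<cdot>\<^sub>v v" unfolding v(3) using v
      by (intro eq_vecI, auto simp: algebra_simps)
    finally have "(complex_of_real b - l) \<in> spectrum H"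
      unfolding spectrum_def eigenvalue_def eigenvector_def using v H by auto
    from spec[OF this[unfolded H_def]] obtain r where r: "complex_of_real b - l = complex_of_real r" "a \<le> r" "r \<le> b" by auto
    hence "l = complex_of_real (b - r)" by (simp add: algebra_simps)
    hence "cmod l = \<bar>b - r\<bar>" by (simp only: norm_of_real)
    with l(2) r show ?thesis by simp
  qed
  moreover have "spectral_radius H' \<ge> 0" using spectral_radius_mem_max(1)[OF H' n] by auto
  ultimately have "(spectral_radius H')^2 \<le> (b - a)^2" by (simp add: power_mono)
  hence hb: "nsq (H' *\<^sub>v x) \<le> (b - a)^2 * nsq x" using core[OF H' hH' n x] nx
    by (meson mult_right_mono order_trans)
  have "ip x (H' *\<^sub>v x) = complex_of_real b * ip x x - ip x (H *\<^sub>v x)"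
    unfolding H'v[OF x] using x hx by (simp add: ip_minus_right ip_smult_right)
  also have "\<dots> = complex_of_real (b * nsq x - nsq (C *\<^sub>v x))" unfolding ip_self e1[symmetric] by simp
  finally have e2: "ip x (H' *\<^sub>v x) = complex_of_real (b * nsq x - nsq (C *\<^sub>v x))" .
  have "(b * nsq x - nsq (C *\<^sub>v x))^2 = (cmod (ip x (H' *\<^sub>v x)))^2" unfolding e2 norm_of_real by simp
  also have "\<dots> \<le> nsq x * nsq (H' *\<^sub>v x)" using x H' by (intro CS, simp)
  also have "\<dots> \<le> nsq x * ((b - a)^2 * nsq x)" using hb nx by (rule mult_left_mono)
  also have "\<dots> = ((b - a) * nsq x)^2" by (simp add: power2_eq_square)
  finally have "(b * nsq x - nsq (C *\<^sub>v x))^2 \<le> ((b - a) * nsq x)^2" .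
  moreover have "0 \<le> b - a" using ab by linarith
  ultimately have "b * nsq x - nsq (C *\<^sub>v x) \<le> (b - a) * nsq x"
    using power2_le_imp_le mult_nonneg_nonneg nx by blast
  thus "a * nsq x \<le> nsq (C *\<^sub>v x)" by (simp add: algebra_simps)
qed

lemma nsq_unitary: assumes Q: "unitary_mat n Q" and z: "z \<in> carrier_vec n"
  shows "nsq (Q *\<^sub>v z) = nsq z"
proof -
  have Qc: "Q \<in> carrier_mat n n" and QQ: "mat_adjoint Q * Q = 1\<^sub>m n" using Q unfolding unitary_mat_def by auto
  have "complex_of_real (nsq (Q *\<^sub>v z)) = ip z ((mat_adjoint Q * Q) *\<^sub>v z)" using nsq_CC[OF Qc z] .
  also have "\<dots> = complex_of_real (nsq z)" unfolding QQ using z by (simp add: ip_self)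
  finally show ?thesis by simp
qed

lemma spec_CC: assumes C: "(C::complex mat) \<in> carrier_mat n n" and l: "l \<in> spectrum (mat_adjoint C * C)"
  shows "l = complex_of_real (Re l) \<and> 0 \<le> Re l"
proof -
  have H: "mat_adjoint C * C \<in> carrier_mat n n" using adj_carrier[OF C] C by simp
  from l obtain v where ev: "eigenvector (mat_adjoint C * C) v l" unfolding spectrum_def eigenvalue_def by auto
  hence v: "v \<in> carrier_vec n" "v \<noteq> 0\<^sub>v n" "(mat_adjoint C * C) *\<^sub>v v = l \<cdot>\<^sub>v v"
    using H unfolding eigenvector_def by auto
  have "complex_of_real (nsq (C *\<^sub>v v)) = ip v (l \<cdot>\<^sub>v v)" using nsq_CC[OF C v(1)] v(3) by simp
  also have "\<dots> = l * complex_of_real (nsq v)" by (simp add: ip_smult_right ip_self)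
  finally have e: "l = complex_of_real (nsq (C *\<^sub>v v) / nsq v)" using nsq_pos[OF v(1,2)]
    by (simp add: field_simps)
  show ?thesis using e by (simp add: nsq_nonneg)
qed

lemma spec_CCt: assumes A: "(A::complex mat) \<in> carrier_mat n n"
  and l: "l \<in> spectrum (A * mat_adjoint A)"
  shows "l \<in> spectrum (mat_adjoint A * A)"
proof -
  have At: "mat_adjoint A \<in> carrier_mat n n" using adj_carrier[OF A] .
  have H: "mat_adjoint A * A \<in> carrier_mat n n" using At A by simp
  have H2: "A * mat_adjoint A \<in> carrier_mat n n" using At A by simp
  from l obtain v where ev: "eigenvector (A * mat_adjoint A) v l" unfolding spectrum_def eigenvalue_def by auto
  hence v: "v \<in> carrier_vec n" "v \<noteq> 0\<^sub>v n" "(A * mat_adjoint A) *\<^sub>v v = l \<cdot>\<^sub>v v"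
    using H2 unfolding eigenvector_def by auto
  have w: "mat_adjoint A *\<^sub>v v \<in> carrier_vec n" using At v by simp
  show ?thesis
  proof (cases "mat_adjoint A *\<^sub>v v = 0\<^sub>v n")
    case False
    have "(mat_adjoint A * A) *\<^sub>v (mat_adjoint A *\<^sub>v v) = mat_adjoint A *\<^sub>v ((A * mat_adjoint A) *\<^sub>v v)"
      using A At v by (simp add: assoc_mult_mat_vec[of _ n n _ n])
    also have "\<dots> = l \<cdot>\<^sub>v (mat_adjoint A *\<^sub>v v)" unfolding v(3) using mult_mat_vec[OF At v(1)] .
    moreover have "dim_row (mat_adjoint A) = n" using At by simp
    ultimately show ?thesis using False w H
      unfolding spectrum_def eigenvalue_def eigenvector_def by auto
  next
    case True
    have "l \<cdot>\<^sub>v v = A *\<^sub>v (mat_adjoint A *\<^sub>v v)" using v A At by (simp add: assoc_mult_mat_vec[of _ n n _ n])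
    also have "\<dots> = 0\<^sub>v n" unfolding True using A by (intro eq_vecI, auto simp: scalar_prod_def)
    finally have lv: "l \<cdot>\<^sub>v v = 0\<^sub>v n" .
    have l0: "l = 0"
    proof (rule ccontr)
      assume "l \<noteq> 0"
      have "v = (1/l) \<cdot>\<^sub>v (l \<cdot>\<^sub>v v)" using \<open>l \<noteq> 0\<close> v(1) by (intro eq_vecI, auto)
      also have "\<dots> = 0\<^sub>v n" unfolding lv by (intro eq_vecI, auto)
      finally show False using v(2) by simp
    qed
    have "det (mat_adjoint A) = 0" using det_0_iff_vec_prod_zero[OF At] v True by auto
    hence "det (mat_adjoint A * A) = 0" using det_mult[OF At A] by simp
    then obtain u where u: "u \<in> carrier_vec n" "u \<noteq> 0\<^sub>v n" "(mat_adjoint A * A) *\<^sub>v u = 0\<^sub>v n"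
      using det_0_iff_vec_prod_zero[OF H] by auto
    have "(mat_adjoint A * A) *\<^sub>v u = 0 \<cdot>\<^sub>v u" using u by (intro eq_vecI, auto)
    moreover have "dim_row (mat_adjoint A) = n" using At by simp
    ultimately show ?thesis using u H l0 unfolding spectrum_def eigenvalue_def eigenvector_def by auto
  qed
qed

lemma complex_case:
  assumes n: "n > 0" and A: "(A::complex mat) \<in> carrier_mat n n" and Q1: "unitary_mat n Q1"
    and Q2: "unitary_mat n Q2" and B: "B \<in> carrier_mat n n"
    and BB: "B * B = Q1 * mat_adjoint A * Q2 * A"
  shows "lambda_max_abs B \<le> sigma_max A \<and> lambda_min_abs B \<ge> sigma_min A"
proof -
  define H where "H = mat_adjoint A * A"
  have At: "mat_adjoint A \<in> carrier_mat n n" using adj_carrier[OF A] .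
  have H: "H \<in> carrier_mat n n" using At A by (simp add: H_def)
  have finH: "finite (spectrum H)" using card_finite_spectrum(1)[OF H] .
  have neH: "spectrum H \<noteq> {}" using spectrum_non_empty[OF H n] .
  have finS: "finite (singular_values A)" using finH unfolding singular_values_def H_def by simp
  have neS: "singular_values A \<noteq> {}" using neH unfolding singular_values_def H_def by simp
  define smax where "smax = sigma_max A"
  define smin where "smin = sigma_min A"
  have smin_mem: "smin \<in> singular_values A" unfolding smin_def sigma_min_def using finS neS by simp
  have smin0: "smin \<ge> 0" using smin_mem spec_CC[OF A] unfolding singular_values_def by auto
  have bnds: "smin \<le> sqrt (Re l) \<and> sqrt (Re l) \<le> smax" if l: "l \<in> spectrum H" for l
  proof -
    have "sqrt (Re l) \<in> singular_values A" using l unfolding singular_values_def H_def by auto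
    thus ?thesis unfolding smin_def smax_def sigma_min_def sigma_max_def using finS by auto
  qed
  have sle: "smin \<le> smax" using bnds neH by fastforce
  define a where "a = smin^2"
  define b where "b = smax^2"
  have a0: "0 \<le> a" unfolding a_def by simp
  have ab: "a \<le> b" unfolding a_def b_def using sle smin0 by (simp add: power_mono)
  have specH: "\<exists>r. l = complex_of_real r \<and> a \<le> r \<and> r \<le> b" if l: "l \<in> spectrum H" for l
  proof -
    from spec_CC[OF A l[unfolded H_def]] have e: "l = complex_of_real (Re l)" and p: "0 \<le> Re l" by auto
    from bnds[OF l] have s1: "smin \<le> sqrt (Re l)" and s2: "sqrt (Re l) \<le> smax" by auto
    have sq0: "0 \<le> sqrt (Re l)" using smin0 s1 by linarith
    have q1: "smin^2 \<le> (sqrt (Re l))^2" by (rule power_mono[OF s1 smin0])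
    have q2: "(sqrt (Re l))^2 \<le> smax^2" by (rule power_mono[OF s2 sq0])
    have q3: "(sqrt (Re l))^2 = Re l" using p by simp
    have "a \<le> Re l" "Re l \<le> b" using q1 q2 unfolding a_def b_def q3 by auto
    with e show ?thesis by blast
  qed
  have GA: "a * nsq x \<le> nsq (A *\<^sub>v x) \<and> nsq (A *\<^sub>v x) \<le> b * nsq x" if x: "x \<in> carrier_vec n" for x
    by (rule GL[OF A n a0 ab _ x], rule specH, simp add: H_def)
  have GAt: "a * nsq x \<le> nsq (mat_adjoint A *\<^sub>v x) \<and> nsq (mat_adjoint A *\<^sub>v x) \<le> b * nsq x"
    if x: "x \<in> carrier_vec n" for x
  proof (rule GL[OF At n a0 ab _ x])
    fix l assume "l \<in> spectrum (mat_adjoint (mat_adjoint A) * mat_adjoint A)"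
    hence "l \<in> spectrum (A * mat_adjoint A)" unfolding adj_adj[OF A] .
    hence "l \<in> spectrum H" unfolding H_def by (rule spec_CCt[OF A])
    thus "\<exists>r. l = complex_of_real r \<and> a \<le> r \<and> r \<le> b" by (rule specH)
  qed
  have Q1c: "Q1 \<in> carrier_mat n n" and Q2c: "Q2 \<in> carrier_mat n n" using Q1 Q2 unfolding unitary_mat_def by auto
  have eig: "smin \<le> cmod m \<and> cmod m \<le> smax" if m: "m \<in> spectrum B" for m
  proof -
    from m obtain v where ev: "eigenvector B v m" unfolding spectrum_def eigenvalue_def by auto
    hence v: "v \<in> carrier_vec n" "v \<noteq> 0\<^sub>v n" "B *\<^sub>v v = m \<cdot>\<^sub>v v"
      using B unfolding eigenvector_def by auto
    have nv: "nsq v > 0" using nsq_pos[OF v(1,2)] .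
    define y where "y = A *\<^sub>v v"
    define z where "z = Q2 *\<^sub>v y"
    define w where "w = mat_adjoint A *\<^sub>v z"
    have y: "y \<in> carrier_vec n" using A v by (simp add: y_def)
    have z: "z \<in> carrier_vec n" using Q2c y by (simp add: z_def)
    have w: "w \<in> carrier_vec n" using At z by (simp add: w_def)
    have "(B * B) *\<^sub>v v = B *\<^sub>v (B *\<^sub>v v)" using B v by (simp add: assoc_mult_mat_vec[of _ n n _ n])
    also have "\<dots> = (m * m) \<cdot>\<^sub>v v" unfolding v(3) using mult_mat_vec[OF B v(1)] v(3)
      by (simp add: smult_smult_assoc)
    finally have e1: "(B * B) *\<^sub>v v = (m * m) \<cdot>\<^sub>v v" .
    have "(B * B) *\<^sub>v v = Q1 *\<^sub>v w" unfolding BB w_def z_def y_def using Q1c Q2c A At v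
      by (simp add: assoc_mult_mat_vec[of _ n n _ n])
    hence "nsq ((m * m) \<cdot>\<^sub>v v) = nsq w" using e1 nsq_unitary[OF Q1 w] by simp
    hence e2: "(cmod m)^4 * nsq v = nsq w" by (simp add: nsq_smult norm_mult power2_eq_square power4_eq_xxxx)
    have nz: "nsq z = nsq y" unfolding z_def using nsq_unitary[OF Q2 y] .
    from GA[OF v(1)] have y1: "a * nsq v \<le> nsq y" and y2: "nsq y \<le> b * nsq v" unfolding y_def by auto
    from GAt[OF z] have w1: "a * nsq z \<le> nsq w" and w2: "nsq w \<le> b * nsq z" unfolding w_def by auto
    have b0: "0 \<le> b" using a0 ab by simp
    have "(a^2) * nsq v \<le> nsq w"
    proof -
      have "a^2 * nsq v = a * (a * nsq v)" by (simp add: power2_eq_square)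
      also have "\<dots> \<le> a * nsq y" using y1 a0 by (rule mult_left_mono)
      also have "\<dots> \<le> nsq w" using w1 nz by simp
      finally show ?thesis .
    qed
    moreover have "nsq w \<le> (b^2) * nsq v"
    proof -
      have "nsq w \<le> b * nsq y" using w2 nz by simp
      also have "\<dots> \<le> b * (b * nsq v)" using y2 b0 by (rule mult_left_mono)
      also have "\<dots> = b^2 * nsq v" by (simp add: power2_eq_square)
      finally show ?thesis .
    qed
    ultimately have "a^2 * nsq v \<le> (cmod m)^4 * nsq v" "(cmod m)^4 * nsq v \<le> b^2 * nsq v"
      using e2 by auto
    hence "a^2 \<le> (cmod m)^4" "(cmod m)^4 \<le> b^2" using nv by auto
    hence h1: "smin^4 \<le> (cmod m)^4" and h2: "(cmod m)^4 \<le> smax^4" unfolding a_def b_def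
      by (simp_all add: power_mult[symmetric])
    have smax0: "0 \<le> smax" using smin0 sle by linarith
    have "smin \<le> cmod m" using h1 smin0 power_mono_iff[of smin "cmod m" 4] by simp
    moreover have "cmod m \<le> smax" using h2 smax0 power_mono_iff[of "cmod m" smax 4] by simp
    ultimately show ?thesis by simp
  qed
  have finB: "finite (cmod ` spectrum B)" using card_finite_spectrum(1)[OF B] by simp
  have neB: "cmod ` spectrum B \<noteq> {}" using spectrum_non_empty[OF B n] by simp
  show ?thesis unfolding lambda_max_abs_def lambda_min_abs_def smin_def[symmetric] smax_def[symmetric]
    using finB neB eig by (auto simp: Max_le_iff Min_ge_iff)
qed

lemma cmat_carrier: "A \<in> carrier_mat n m \<Longrightarrow> cmat A \<in> carrier_mat n m"
  by (simp add: cmat_def)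

lemma cmat_mult: "A \<in> carrier_mat n k \<Longrightarrow> B \<in> carrier_mat k m \<Longrightarrow> cmat (A * B) = cmat A * cmat B"
  unfolding cmat_def by (rule of_real_hom.mat_hom_mult)

lemma radj: "(Q::real mat) \<in> carrier_mat n m \<Longrightarrow> mat_adjoint Q = transpose_mat Q"
  by (intro eq_matI, auto simp: mat_adjoint_def mat_of_rows_def conjugate_real_def)

lemma cmat_dims[simp]: "dim_row (cmat A) = dim_row A" "dim_col (cmat A) = dim_col A"
  by (simp_all add: cmat_def)

lemma cmat_index: "i < dim_row A \<Longrightarrow> j < dim_col A \<Longrightarrow> cmat A $$ (i,j) = complex_of_real (A $$ (i,j))"
  by (simp add: cmat_def)

lemma cmat_adj: assumes A: "A \<in> carrier_mat n m"
  shows "mat_adjoint (cmat A) = cmat (transpose_mat A)"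
proof -
  have cA: "cmat A \<in> carrier_mat n m" using cmat_carrier[OF A] .
  have "mat_adjoint (cmat A) $$ (i,j) = cmat (transpose_mat A) $$ (i,j)" if "i < m" "j < n" for i j
    using that A by (simp add: adj_index[OF cA] cmat_index)
  thus ?thesis
    by (intro eq_matI, insert adj_carrier[OF cA] A, auto)
qed

lemma cmat_one: "cmat (1\<^sub>m n) = 1\<^sub>m n"
  by (intro eq_matI, auto simp: cmat_def)

lemma unitary_cmat: assumes Q: "unitary_mat n Q" shows "unitary_mat n (cmat Q)"
proof -
  have Qc: "Q \<in> carrier_mat n n" and e1: "mat_adjoint Q * Q = 1\<^sub>m n" and e2: "Q * mat_adjoint Q = 1\<^sub>m n"
    using Q unfolding unitary_mat_def by auto
  have Tc: "transpose_mat Q \<in> carrier_mat n n" using Qc by simp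
  have "mat_adjoint (cmat Q) * cmat Q = cmat (mat_adjoint Q * Q)"
    unfolding cmat_adj[OF Qc] radj[OF Qc] using cmat_mult[OF Tc Qc] by simp
  moreover have "cmat Q * mat_adjoint (cmat Q) = cmat (Q * mat_adjoint Q)"
    unfolding cmat_adj[OF Qc] radj[OF Qc] using cmat_mult[OF Qc Tc] by simp
  ultimately show ?thesis using e1 e2 cmat_carrier[OF Qc] unfolding unitary_mat_def by (simp add: cmat_one)
qed

theorem mainTheorem2:
  shows
  "(\<forall>(n::nat) (A::complex mat) Q1 Q2 B.
      n > 0 \<longrightarrow> A \<in> carrier_mat n n \<longrightarrow> unitary_mat n Q1 \<longrightarrow> unitary_mat n Q2 \<longrightarrow>
      B \<in> carrier_mat n n \<longrightarrow> B * B = Q1 * mat_adjoint A * Q2 * A \<longrightarrow>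
      lambda_max_abs B \<le> sigma_max A \<and> lambda_min_abs B \<ge> sigma_min A)
   \<and>
   (\<forall>(n::nat) (A::real mat) Q1 Q2 B.
      n > 0 \<longrightarrow> A \<in> carrier_mat n n \<longrightarrow> unitary_mat n Q1 \<longrightarrow> unitary_mat n Q2 \<longrightarrow>
      B \<in> carrier_mat n n \<longrightarrow> B * B = Q1 * transpose_mat A * Q2 * A \<longrightarrow>
      lambda_max_abs (cmat B) \<le> sigma_max (cmat A) \<and>
      lambda_min_abs (cmat B) \<ge> sigma_min (cmat A))"
proof (intro conjI allI impI)
  fix n and A :: "complex mat" and Q1 Q2 B
  assume "n > 0" "A \<in> carrier_mat n n" "unitary_mat n Q1" "unitary_mat n Q2"
    "B \<in> carrier_mat n n" "B * B = Q1 * mat_adjoint A * Q2 * A"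
  from complex_case[OF this] show "lambda_max_abs B \<le> sigma_max A" "lambda_min_abs B \<ge> sigma_min A"
    by auto
next
  fix n and A :: "real mat" and Q1 Q2 B
  assume n: "n > 0" and A: "A \<in> carrier_mat n n" and Q1: "unitary_mat n Q1" and Q2: "unitary_mat n Q2"
    and B: "B \<in> carrier_mat n n" and BB: "B * B = Q1 * transpose_mat A * Q2 * A"
  have Q1c: "Q1 \<in> carrier_mat n n" and Q2c: "Q2 \<in> carrier_mat n n" using Q1 Q2 unfolding unitary_mat_def by auto
  have At: "transpose_mat A \<in> carrier_mat n n" using A by simp
  have "cmat B * cmat B = cmat (B * B)" using cmat_mult[OF B B] by simp
  also have "\<dots> = cmat Q1 * cmat (transpose_mat A) * cmat Q2 * cmat A"
  proof -
    have c1: "Q1 * transpose_mat A \<in> carrier_mat n n" using Q1c At by simp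
    have c2: "Q1 * transpose_mat A * Q2 \<in> carrier_mat n n" using c1 Q2c by simp
    show ?thesis unfolding BB cmat_mult[OF c2 A] cmat_mult[OF c1 Q2c] cmat_mult[OF Q1c At] ..
  qed
  also have "\<dots> = cmat Q1 * mat_adjoint (cmat A) * cmat Q2 * cmat A" unfolding cmat_adj[OF A] ..
  finally have BB': "cmat B * cmat B = cmat Q1 * mat_adjoint (cmat A) * cmat Q2 * cmat A" .
  from complex_case[OF n cmat_carrier[OF A] unitary_cmat[OF Q1] unitary_cmat[OF Q2] cmat_carrier[OF B] BB']
  show "lambda_max_abs (cmat B) \<le> sigma_max (cmat A)" "lambda_min_abs (cmat B) \<ge> sigma_min (cmat A)"
    by auto
qed

end
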